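(* Let $q\in(0,1)$, $\beta<1$ real, $n\in\mathbb{N}_0$, $z\in\mathbb{C}\setminus\{0\}$, and let $\tau\neq0$ satisfy $q(\tau+\tau^{-1})=\beta(z+z^{-1})$. Then \[ p_n^{(q,\beta)}(z+z^{-1};q)=\frac{(q;q)_n}{(\beta;q)_n}\sum_{k=0}^{n}\frac{(q\tau z^{-1};q)_k(q\tau^{-1}z;q)_{n-k}}{(q;q)_k(q;q)_{n-k}}z^{2k-n}, \] and (whenever the terms below are defined) \[ p_n^{(q,\beta)}(z+z^{-1};q)=\frac{(q\tau^{-1}z;q)_n}{z^n(\beta;q)_n}\,{}_2\phi_1\!\left(q^{-n},q\tau z^{-1};q^{-n}\tau z^{-1};q,\tau z\right)=\frac{(q^2;q)_n}{q^n\tau^n(\beta;q)_n}\,{}_3\phi_2\!\left(q^{-n},q\tau z^{-1},q\tau z;q^2,0;q,q\right). \]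
   Context: $(a;q)_n:=\prod_{j=0}^{n-1}(1-aq^j)$. The monic polynomials $p_n^{(\alpha,\beta)}(x;q)$ satisfy $p_{-1}=0$, $p_0=1$, $p_{n+1}(x)=xp_n(x)-\tilde\gamma_{n-1}\tilde\gamma_np_{n-1}(x)$ with $\tilde\gamma_n=(1-\alpha q^n)/(1-\beta q^n)$; here $\alpha=q$. ${}_2\phi_1(a,b;c;q,w)=\sum_{k\ge0}\frac{(a,b;q)_k}{(c,q;q)_k}w^k$ and ${}_3\phi_2(a_1,a_2,a_3;b_1,b_2;q,w)=\sum_{k\ge0}\frac{(a_1,a_2,a_3;q)_k}{(b_1,b_2,q;q)_k}w^k$ (both terminating here because of the parameter $q^{-n}$). *)

theory Defs
  imports Complex_Main
begin

definition qpoch :: "complex \<Rightarrow> complex \<Rightarrow> nat \<Rightarrow> complex" where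
  "qpoch a q n = (\<Prod>j<n. 1 - a * q ^ j)"

definition gam :: "real \<Rightarrow> real \<Rightarrow> real \<Rightarrow> nat \<Rightarrow> complex" where
  "gam \<alpha> \<beta> q n = complex_of_real ((1 - \<alpha> * q ^ n) / (1 - \<beta> * q ^ n))"

text \<open>Monic polynomials p_n^{(alpha,beta)}(x;q):
  p_0 = 1, p_1 = x (since p_{-1} = 0), p_{n+2} = x p_{n+1} - gam_n gam_{n+1} p_n.\<close>
fun pab :: "real \<Rightarrow> real \<Rightarrow> real \<Rightarrow> nat \<Rightarrow> complex \<Rightarrow> complex" where
  "pab \<alpha> \<beta> q 0 x = 1"
| "pab \<alpha> \<beta> q (Suc 0) x = x"
| "pab \<alpha> \<beta> q (Suc (Suc n)) x =
     x * pab \<alpha> \<beta> q (Suc n) x - gam \<alpha> \<beta> q n * gam \<alpha> \<beta> q (Suc n) * pab \<alpha> \<beta> q n x"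

text \<open>Basic hypergeometric series (as series; terminating in our use).\<close>
definition phi21 :: "complex \<Rightarrow> complex \<Rightarrow> complex \<Rightarrow> complex \<Rightarrow> complex \<Rightarrow> complex" where
  "phi21 a b c q w = (\<Sum>k. qpoch a q k * qpoch b q k / (qpoch c q k * qpoch q q k) * w ^ k)"

definition phi32 :: "complex \<Rightarrow> complex \<Rightarrow> complex \<Rightarrow> complex \<Rightarrow> complex \<Rightarrow> complex \<Rightarrow> complex \<Rightarrow> complex" where
  "phi32 a1 a2 a3 b1 b2 q w = (\<Sum>k. qpoch a1 q k * qpoch a2 q k * qpoch a3 q k
       / (qpoch b1 q k * qpoch b2 q k * qpoch q q k) * w ^ k)"

end

theory Submission
  imports Defs "HOL-Computational_Algebra.Formal_Power_Series"
begin

lemma qpoch_0[simp]: "qpoch a q 0 = 1" by (simp add: qpoch_def)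
lemma qpoch_Suc: "qpoch a q (Suc n) = qpoch a q n * (1 - a * q ^ n)"
  by (simp add: qpoch_def)

lemma nth_lin: fixes F :: "complex fps" shows "fps_nth (F * (1 - fps_const c * fps_X)) n = fps_nth F n - (if n = 0 then 0 else c * fps_nth F (n - 1))"
proof -
  have "F * (1 - fps_const c * fps_X) = F - fps_const c * (fps_X * F)"
    by (simp add: ring_distribs ac_simps)
  then show ?thesis by simp
qed

lemma nth_lin2: fixes F :: "complex fps" shows "fps_nth (F * (1 - fps_const c1 * fps_X) * (1 - fps_const c2 * fps_X)) (Suc (Suc m))
   = fps_nth F (Suc (Suc m)) - c1 * fps_nth F (Suc m) - c2 * (fps_nth F (Suc m) - c1 * fps_nth F m)"
  by (simp only: nth_lin) simp

definition sc :: "complex \<Rightarrow> complex fps \<Rightarrow> complex fps" where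
  "sc qc F = Abs_fps (\<lambda>k. qc ^ k * fps_nth F k)"

lemma sc_mult: "sc qc (F * G) = sc qc F * sc qc G"
proof (rule fps_ext)
  fix n
  have "fps_nth (sc qc (F * G)) n = (\<Sum>i=0..n. qc ^ n * (fps_nth F i * fps_nth G (n - i)))"
    by (simp add: sc_def fps_mult_nth sum_distrib_left)
  also have "\<dots> = (\<Sum>i=0..n. (qc ^ i * fps_nth F i) * (qc ^ (n - i) * fps_nth G (n - i)))"
  proof (rule sum.cong)
    fix i assume "i \<in> {0..n}"
    then have "qc ^ n = qc ^ i * qc ^ (n - i)" by (simp add: power_add[symmetric])
    then show "qc ^ n * (fps_nth F i * fps_nth G (n - i)) = (qc ^ i * fps_nth F i) * (qc ^ (n - i) * fps_nth G (n - i))"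
      by simp
  qed simp
  also have "\<dots> = fps_nth (sc qc F * sc qc G) n" by (simp add: sc_def fps_mult_nth)
  finally show "fps_nth (sc qc (F * G)) n = fps_nth (sc qc F * sc qc G) n" .
qed

lemma fpsA:
  assumes nz: "\<And>m. qpoch qc qc m \<noteq> 0"
  shows "Abs_fps (\<lambda>k. qpoch a qc k / qpoch qc qc k * z ^ k) * (1 - fps_const z * fps_X)
       = sc qc (Abs_fps (\<lambda>k. qpoch a qc k / qpoch qc qc k * z ^ k)) * (1 - fps_const (a * z) * fps_X)"
proof (rule fps_ext)
  fix n
  show "fps_nth (Abs_fps (\<lambda>k. qpoch a qc k / qpoch qc qc k * z ^ k) * (1 - fps_const z * fps_X)) n
       = fps_nth (sc qc (Abs_fps (\<lambda>k. qpoch a qc k / qpoch qc qc k * z ^ k)) * (1 - fps_const (a * z) * fps_X)) n"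
  proof (cases n)
    case 0 then show ?thesis by (simp add: nth_lin sc_def)
  next
    case (Suc m)
    have h1: "qpoch qc qc m \<noteq> 0" by (rule nz)
    have h2: "qpoch qc qc m * (1 - qc * qc ^ m) \<noteq> 0" using nz[of "Suc m"] by (simp add: qpoch_Suc)
    then have h3: "1 - qc * qc ^ m \<noteq> 0" by simp
    show ?thesis using h1 h3 unfolding Suc
      by (simp add: nth_lin sc_def qpoch_Suc field_simps)
  qed
qed

lemma powi_split:
  fixes z :: complex
  assumes "z \<noteq> 0" "i \<le> m"
  shows "z powi (2 * int i - int m) = z ^ i * inverse z ^ (m - i)"
proof -
  have e: "2 * int i - int m = int i + (- int (m - i))" using assms(2) by simp
  have "z powi (2 * int i - int m) = z powi (int i) * z powi (- int (m - i))"
    unfolding e by (rule power_int_add) (use assms(1) in simp)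
  also have "z powi (- int (m - i)) = inverse z ^ (m - i)"
    by (simp only: power_int_minus power_int_of_nat power_inverse)
  finally show ?thesis by (simp only: power_int_of_nat)
qed

lemma f_rec:
  fixes qc a b z :: complex
  assumes nz: "\<And>m. qpoch qc qc m \<noteq> 0" and z: "z \<noteq> 0" and ab: "a * b = qc ^ 2"
  defines "f \<equiv> \<lambda>m. \<Sum>k\<le>m. qpoch a qc k * qpoch b qc (m - k) / (qpoch qc qc k * qpoch qc qc (m - k))
                      * z powi (2 * int k - int m)"
  shows "f (Suc (Suc m)) - z * f (Suc m) - inverse z * (f (Suc m) - z * f m)
       = qc ^ Suc (Suc m) * f (Suc (Suc m)) - a * z * (qc ^ Suc m * f (Suc m))
         - b * inverse z * (qc ^ Suc m * f (Suc m) - a * z * (qc ^ m * f m))"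
proof -
  define FA where "FA = Abs_fps (\<lambda>k. qpoch a qc k / qpoch qc qc k * z ^ k)"
  define FB where "FB = Abs_fps (\<lambda>k. qpoch b qc k / qpoch qc qc k * inverse z ^ k)"
  define H where "H = FA * FB"
  have Hn: "fps_nth H m = f m" for m
  proof -
    have "fps_nth H m = (\<Sum>i=0..m. qpoch a qc i / qpoch qc qc i * z ^ i *
                 (qpoch b qc (m - i) / qpoch qc qc (m - i) * inverse z ^ (m - i)))"
      by (simp add: H_def FA_def FB_def fps_mult_nth)
    also have "\<dots> = f m" unfolding f_def atMost_atLeast0
    proof (rule sum.cong[OF refl])
      fix x assume "x \<in> {0..m}"
      then have "x \<le> m" by simp
      show "qpoch a qc x / qpoch qc qc x * z ^ x * (qpoch b qc (m - x) / qpoch qc qc (m - x) * inverse z ^ (m - x))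
         = qpoch a qc x * qpoch b qc (m - x) / (qpoch qc qc x * qpoch qc qc (m - x)) * z powi (2 * int x - int m)"
        unfolding powi_split[OF z \<open>x \<le> m\<close>] by simp
    qed
    finally show ?thesis .
  qed
  have A: "FA * (1 - fps_const z * fps_X) = sc qc FA * (1 - fps_const (a * z) * fps_X)"
    unfolding FA_def by (rule fpsA[OF nz])
  have B: "FB * (1 - fps_const (inverse z) * fps_X) = sc qc FB * (1 - fps_const (b * inverse z) * fps_X)"
    unfolding FB_def by (rule fpsA[OF nz])
  have "H * (1 - fps_const z * fps_X) * (1 - fps_const (inverse z) * fps_X)
      = (FA * (1 - fps_const z * fps_X)) * (FB * (1 - fps_const (inverse z) * fps_X))"
    by (simp only: H_def mult.assoc mult.commute mult.left_commute)
  also have "\<dots> = (sc qc FA * (1 - fps_const (a * z) * fps_X)) * (sc qc FB * (1 - fps_const (b * inverse z) * fps_X))"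
    by (simp only: A B)
  also have "\<dots> = sc qc H * (1 - fps_const (a * z) * fps_X) * (1 - fps_const (b * inverse z) * fps_X)"
    by (simp only: H_def sc_mult mult.assoc mult.commute mult.left_commute)
  finally have E: "H * (1 - fps_const z * fps_X) * (1 - fps_const (inverse z) * fps_X)
     = sc qc H * (1 - fps_const (a * z) * fps_X) * (1 - fps_const (b * inverse z) * fps_X)" .
  have "fps_nth (H * (1 - fps_const z * fps_X) * (1 - fps_const (inverse z) * fps_X)) (Suc (Suc m))
     = fps_nth (sc qc H * (1 - fps_const (a * z) * fps_X) * (1 - fps_const (b * inverse z) * fps_X)) (Suc (Suc m))"
    by (simp only: E)
  then show ?thesis unfolding nth_lin2 by (simp only: sc_def fps_nth_Abs_fps Hn)
qed

lemma pos_factor: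
  fixes q a :: real
  assumes "0 < q" "q < 1" "a < 1"
  shows "0 < 1 - a * q ^ j"
proof (cases "a \<ge> 0")
  case True
  have "q ^ j \<le> 1" using assms by (simp add: power_le_one)
  then have "a * q ^ j \<le> a * 1" using True by (rule mult_left_mono)
  then show ?thesis using assms by simp
next
  case False
  then have "a * q ^ j \<le> 0" using assms by (simp add: mult_nonpos_nonneg)
  then show ?thesis by simp
qed

lemma qpoch_real: "qpoch (of_real a) (of_real q) n = of_real (\<Prod>j<n. 1 - a * q ^ j)"
  by (simp add: qpoch_def)

lemma qpoch_real_nz:
  fixes q a :: real
  assumes "0 < q" "q < 1" "a < 1"
  shows "qpoch (of_real a) (of_real q) n \<noteq> 0"
proof -
  have "0 < (\<Prod>j<n. 1 - a * q ^ j)" by (rule prod_pos) (use pos_factor[OF assms] in auto)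
  then have "(\<Prod>j<n. 1 - a * q ^ j) \<noteq> 0" by (metis less_irrefl)
  then show ?thesis by (simp only: qpoch_real of_real_eq_0_iff not_False_eq_True)
qed

lemma factor_nz:
  fixes q a :: real
  assumes "0 < q" "q < 1" "a < 1"
  shows "1 - of_real a * (of_real q :: complex) ^ j \<noteq> 0"
proof -
  have "0 < 1 - a * q ^ j" by (rule pos_factor[OF assms])
  then have r: "a * q ^ j \<noteq> 1" by linarith
  have "complex_of_real a * complex_of_real q ^ j \<noteq> 1"
    using r by (metis of_real_eq_1_iff of_real_mult of_real_power)
  then show ?thesis by simp
qed

lemma Qpow_nz:
  fixes q :: real
  assumes "0 < q" "q < 1"
  shows "1 - (of_real q :: complex) ^ Suc j \<noteq> 0"
  using factor_nz[OF assms assms(2), of j] by simp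

lemma part1:
  fixes q \<beta> :: real and z \<tau> :: complex
  assumes q0: "0 < q" and q1: "q < 1" and b1: "\<beta> < 1" and z: "z \<noteq> 0" and t: "\<tau> \<noteq> 0"
    and hyp: "of_real q * (\<tau> + inverse \<tau>) = of_real \<beta> * (z + inverse z)"
  defines "f \<equiv> \<lambda>m. \<Sum>k\<le>m. qpoch (of_real q * \<tau> / z) (of_real q) k * qpoch (of_real q * z / \<tau>) (of_real q) (m - k)
             / (qpoch (of_real q) (of_real q) k * qpoch (of_real q) (of_real q) (m - k))
                      * z powi (2 * int k - int m)"
  shows "pab q \<beta> q n (z + inverse z) =
           qpoch (of_real q) (of_real q) n / qpoch (of_real \<beta>) (of_real q) n * f n"
proof -
  define Q :: complex where "Q = of_real q"
  define B :: complex where "B = of_real \<beta>"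
  define x where "x = z + inverse z"
  define a where "a = Q * \<tau> / z"
  define b where "b = Q * z / \<tau>"
  have nzQ: "\<And>m. qpoch Q Q m \<noteq> 0" unfolding Q_def by (rule qpoch_real_nz[OF q0 q1 q1])
  have nzB: "\<And>m. qpoch B Q m \<noteq> 0" unfolding Q_def B_def by (rule qpoch_real_nz[OF q0 q1 b1])
  have nzQ1: "\<And>m. 1 - Q ^ Suc m \<noteq> 0" unfolding Q_def by (rule Qpow_nz[OF q0 q1])
  have nzB1: "\<And>m. 1 - B * Q ^ m \<noteq> 0" unfolding Q_def B_def by (rule factor_nz[OF q0 q1 b1])
  have Qnz: "Q \<noteq> 0" unfolding Q_def using q0 by simp
  have ab: "a * b = Q ^ 2" unfolding a_def b_def using z t by (simp add: field_simps power2_eq_square)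
  have s: "a * z + b * inverse z = B * x"
    using hyp z t unfolding a_def b_def x_def Q_def B_def by (simp add: field_simps)
  have fdef: "f = (\<lambda>m. \<Sum>k\<le>m. qpoch a Q k * qpoch b Q (m - k) / (qpoch Q Q k * qpoch Q Q (m - k))
                      * z powi (2 * int k - int m))"
    unfolding f_def a_def b_def Q_def by simp
  have rec: "f (Suc (Suc m)) = ((x - B * x * Q ^ Suc m) * f (Suc m) - (1 - Q ^ Suc (Suc m)) * f m) / (1 - Q ^ Suc (Suc m))" for m
  proof -
    have E: "f (Suc (Suc m)) - z * f (Suc m) - inverse z * (f (Suc m) - z * f m)
       = Q ^ Suc (Suc m) * f (Suc (Suc m)) - a * z * (Q ^ Suc m * f (Suc m))
         - b * inverse z * (Q ^ Suc m * f (Suc m) - a * z * (Q ^ m * f m))"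
      unfolding fdef by (rule f_rec[OF nzQ z ab])
    have E2: "f (Suc (Suc m)) - x * f (Suc m) + f m
       = Q ^ Suc (Suc m) * f (Suc (Suc m)) - (a * z + b * inverse z) * (Q ^ Suc m * f (Suc m))
         + (a * b) * (Q ^ m * f m)"
      using E z unfolding x_def by (simp add: field_simps)
    have "(1 - Q ^ Suc (Suc m)) * f (Suc (Suc m)) = (x - B * x * Q ^ Suc m) * f (Suc m) - (1 - Q ^ Suc (Suc m)) * f m"
      using E2 unfolding s ab by (simp add: algebra_simps power2_eq_square)
    then show ?thesis using nzQ1[of "Suc m"] by (simp add: field_simps)
  qed
  have f0: "f 0 = 1" unfolding fdef by simp
  have f1: "f 1 = (1 - b) / (1 - Q) * inverse z + (1 - a) / (1 - Q) * z"
    unfolding fdef by (simp add: qpoch_def power_int_minus)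
  have gam: "gam q \<beta> q m = (1 - Q * Q ^ m) / (1 - B * Q ^ m)" for m
    unfolding gam_def Q_def B_def by simp
  define g where "g m = qpoch Q Q m / qpoch B Q m * f m" for m
  have "pab q \<beta> q n x = g n \<and> pab q \<beta> q (Suc n) x = g (Suc n)"
  proof (induction n)
    case 0
    have "g 1 = x"
    proof -
      have "g 1 = (1 - Q) / (1 - B) * f 1" unfolding g_def by (simp add: qpoch_def)
      also have "f 1 = ((1 - b) * inverse z + (1 - a) * z) / (1 - Q)"
        unfolding f1 by (simp add: add_divide_distrib)
      also have "(1 - Q) / (1 - B) * (((1 - b) * inverse z + (1 - a) * z) / (1 - Q))
           = ((1 - b) * inverse z + (1 - a) * z) / (1 - B)"
        using nzQ1[of 0] by simp
      also have "(1 - b) * inverse z + (1 - a) * z = x - (a * z + b * inverse z)"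
        unfolding x_def by (simp add: algebra_simps)
      also have "\<dots> = x * (1 - B)" unfolding s by (simp add: algebra_simps)
      finally show ?thesis using nzB1[of 0] by simp
    qed
    then show ?case unfolding g_def using f0 by simp
  next
    case (Suc n)
    have IH1: "pab q \<beta> q n x = g n" and IH2: "pab q \<beta> q (Suc n) x = g (Suc n)" using Suc by auto
    have "pab q \<beta> q (Suc (Suc n)) x = x * g (Suc n) - gam q \<beta> q n * gam q \<beta> q (Suc n) * g n"
      using IH1 IH2 by simp
    also have "\<dots> = g (Suc (Suc n))"
    proof -
      have n1: "qpoch Q Q n \<noteq> 0" "qpoch B Q n \<noteq> 0" by (rule nzQ, rule nzB)
      have n2: "1 - Q * Q ^ n \<noteq> 0" "1 - Q * Q ^ Suc n \<noteq> 0" using nzQ1[of n] nzQ1[of "Suc n"] by auto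
      have n3: "1 - B * Q ^ n \<noteq> 0" "1 - B * Q * Q ^ n \<noteq> 0" using nzB1[of n] nzB1[of "Suc n"] by (auto simp: ac_simps)
      have key: "x * (P * A1 / (R * C1) * F1) - A1 / C1 * (A2 / C2) * (P / R * F0)
          = P * A1 * A2 / (R * C1 * C2) * ((x * C2 * F1 - A2 * F0) / A2)"
        if "P \<noteq> 0" "R \<noteq> 0" "A1 \<noteq> 0" "A2 \<noteq> 0" "C1 \<noteq> 0" "C2 \<noteq> 0"
        for P R A1 A2 C1 C2 F0 F1 :: complex
        using that by (simp add: field_simps)
      have e1: "x - B * x * Q ^ Suc n = x * (1 - B * Q * Q ^ n)" by (simp add: algebra_simps)
      show ?thesis unfolding g_def rec gam qpoch_Suc e1
        using key[of "qpoch Q Q n" "qpoch B Q n" "1 - Q * Q ^ n" "1 - Q * (Q * Q ^ n)"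
             "1 - B * Q ^ n" "1 - B * (Q * Q ^ n)" "f (Suc n)" "f n"] n1 n2 n3
        by (simp add: mult.assoc)

    qed
    finally show ?case using IH2 by simp
  qed
  then show ?thesis unfolding g_def x_def Q_def B_def by simp
qed

lemma qpoch_Suc': "qpoch u Q (Suc i) = (1 - u) * qpoch (u * Q) Q i"
proof (induction i)
  case 0 then show ?case by (simp add: qpoch_def)
next
  case (Suc i)
  have "qpoch u Q (Suc (Suc i)) = qpoch u Q (Suc i) * (1 - u * Q ^ Suc i)" by (rule qpoch_Suc)
  also have "\<dots> = (1 - u) * (qpoch (u * Q) Q i * (1 - u * Q * Q ^ i))" unfolding Suc by (simp add: ac_simps)
  also have "\<dots> = (1 - u) * qpoch (u * Q) Q (Suc i)" by (simp add: qpoch_Suc)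
  finally show ?case .
qed

lemma qpoch_inv_zero:
  fixes Q :: complex
  assumes "Q \<noteq> 0" "m < j"
  shows "qpoch (inverse (Q ^ m)) Q j = 0"
  unfolding qpoch_def using assms by (intro prod_zero) (auto intro!: bexI[of _ m])

lemma rat3:
  fixes a Q w X D J :: complex
  assumes "a \<noteq> 0" "Q \<noteq> 0" "w \<noteq> 0" "D \<noteq> 0" "J \<noteq> 0" "Q - w \<noteq> 0"
  shows "(1 - Q * Q * (Q / w)) / a * ((1 - w / (Q * Q)) * X * (Q * J) / D)
   = ((1 + a * a * (Q * J) * (Q * J)) / (a * (Q * J)) - (a + Q * Q / a) * (Q / w)) *
        ((X * (1 - w / Q * J)) * (Q * J) / D)
     - X * (1 - Q * Q * J) * (1 - Q * J) / (a * D)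
     - a * (1 - Q / w) * ((X * (1 - w / Q * J) * Q / (Q - w)) * (1 - w * J) * (Q * J) / D)"
  using assms by (simp add: field_simps)

lemma qpoch_Qpow_nz:
  fixes Q :: complex
  assumes nzQ1: "\<And>m. 1 - Q ^ Suc m \<noteq> 0" and "k \<noteq> 0"
  shows "qpoch (Q ^ k) Q i \<noteq> 0"
proof -
  have "1 - Q ^ k * Q ^ j \<noteq> 0" for j
  proof -
    obtain m where "k + j = Suc m" using assms(2) by (cases k) auto
    then show ?thesis using nzQ1[of m] by (simp add: power_add[symmetric])
  qed
  then show ?thesis unfolding qpoch_def by simp
qed

lemma coeff3:
  fixes Q a b :: complex and n j :: nat
  assumes Q: "Q \<noteq> 0" and a: "a \<noteq> 0" and ab: "a * b = Q ^ 2" and nzQ1: "\<And>m. 1 - Q ^ Suc m \<noteq> 0"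
  defines "c \<equiv> \<lambda>m j. qpoch (inverse (Q ^ m)) Q j * Q ^ j / (qpoch (Q ^ 2) Q j * qpoch Q Q j)"
  defines "d \<equiv> \<lambda>j. if j = 0 then 0 else c (Suc n) (j - 1) / (a * Q ^ (j - 1))"
  shows "(1 - a * b * Q ^ Suc n) / a * c (Suc (Suc n)) j
     = ((1 + a ^ 2 * Q ^ (2 * j)) / (a * Q ^ j) - (a + b) * Q ^ Suc n) * c (Suc n) j - d j
       - a * (1 - Q ^ Suc n) * c n j"
proof (cases j)
  case 0
  show ?thesis unfolding 0 c_def d_def using a by (simp add: field_simps power2_eq_square)
next
  case (Suc i)
  define w where "w = inverse (Q ^ n)"
  define X where "X = qpoch (w / Q) Q i"
  define M where "M = qpoch (Q ^ 2) Q i"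
  define L where "L = qpoch Q Q i"
  define J where "J = Q ^ i"
  define D where "D = M * (1 - Q * Q * J) * (L * (1 - Q * J))"
  have w0: "w \<noteq> 0" unfolding w_def using Q by simp
  have J0: "J \<noteq> 0" unfolding J_def using Q by simp
  have M0: "M \<noteq> 0" unfolding M_def by (rule qpoch_Qpow_nz[OF nzQ1]) simp
  have L0: "L \<noteq> 0" unfolding L_def using qpoch_Qpow_nz[OF nzQ1, of 1 i] by simp
  have U0: "1 - Q * Q * J \<noteq> 0" using nzQ1[of "Suc i"] unfolding J_def by (simp add: ac_simps)
  have V0: "1 - Q * J \<noteq> 0" using nzQ1[of i] unfolding J_def by simp
  have D0: "D \<noteq> 0" unfolding D_def using M0 L0 U0 V0 by simp
  have Qw: "Q - w \<noteq> 0"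
  proof
    assume "Q - w = 0"
    then have "Q * Q ^ n = 1" unfolding w_def using Q by (simp add: field_simps)
    then show False using nzQ1[of n] by simp
  qed
  have i1: "inverse (Q ^ Suc n) = w / Q" unfolding w_def by (simp add: field_simps)
  have i2: "inverse (Q ^ Suc (Suc n)) = w / (Q * Q)" unfolding w_def by (simp add: field_simps)
  have qs2: "qpoch (Q ^ 2) Q (Suc i) = M * (1 - Q * Q * J)" unfolding M_def J_def
    by (simp add: qpoch_Suc power2_eq_square ac_simps)
  have qs1: "qpoch Q Q (Suc i) = L * (1 - Q * J)" unfolding L_def J_def by (simp add: qpoch_Suc)
  have den: "qpoch (Q ^ 2) Q (Suc i) * qpoch Q Q (Suc i) = D" unfolding D_def qs2 qs1 ..
  have Qj: "Q ^ Suc i = Q * J" unfolding J_def by simp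
  have c2: "c (Suc (Suc n)) (Suc i) = (1 - w / (Q * Q)) * X * (Q * J) / D"
  proof -
    have "qpoch (w / (Q * Q)) Q (Suc i) = (1 - w / (Q * Q)) * X"
      unfolding qpoch_Suc' X_def using Q by (simp add: field_simps)
    then show ?thesis unfolding c_def i2 den Qj by simp
  qed
  have c1: "c (Suc n) (Suc i) = X * (1 - w / Q * J) * (Q * J) / D"
  proof -
    have "qpoch (w / Q) Q (Suc i) = X * (1 - w / Q * J)"
      unfolding qpoch_Suc X_def J_def by simp
    then show ?thesis unfolding c_def i1 den Qj by simp
  qed
  have c0: "c n (Suc i) = X * (1 - w / Q * J) * Q / (Q - w) * (1 - w * J) * (Q * J) / D"
  proof -
    have A: "qpoch (w / Q) Q (Suc i) = X * (1 - w / Q * J)"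
      unfolding qpoch_Suc X_def J_def by simp
    have B: "qpoch (w / Q) Q (Suc i) = (1 - w / Q) * qpoch w Q i"
      unfolding qpoch_Suc' using Q by simp
    have E1: "(1 - w / Q) * qpoch w Q i = X * (1 - w / Q * J)" using A B by simp
    have "(Q - w) * qpoch w Q i = Q * ((1 - w / Q) * qpoch w Q i)" using Q by (simp add: field_simps)
    also have "\<dots> = Q * (X * (1 - w / Q * J))" unfolding E1 ..
    finally have E2: "(Q - w) * qpoch w Q i = Q * (X * (1 - w / Q * J))" .
    have "qpoch w Q i = X * (1 - w / Q * J) * Q / (Q - w)"
      using E2 Qw by (simp add: eq_divide_eq ac_simps)
    then have "qpoch w Q (Suc i) = X * (1 - w / Q * J) * Q / (Q - w) * (1 - w * J)"
      unfolding qpoch_Suc J_def by simp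
    then show ?thesis unfolding c_def w_def[symmetric] den Qj by simp
  qed
  have dS: "d (Suc i) = X * (1 - Q * Q * J) * (1 - Q * J) / (a * D)"
  proof -
    have "d (Suc i) = X * J / (M * L) / (a * J)"
      unfolding d_def c_def i1 X_def M_def L_def J_def by simp
    also have "\<dots> = X / (a * M * L)" using J0 by (simp add: field_simps)
    also have "\<dots> = (X * ((1 - Q * Q * J) * (1 - Q * J))) / ((a * M * L) * ((1 - Q * Q * J) * (1 - Q * J)))"
      using U0 V0 by (rule nonzero_mult_divide_mult_cancel_right[symmetric, OF no_zero_divisors])
    also have "\<dots> = X * (1 - Q * Q * J) * (1 - Q * J) / (a * D)"
      unfolding D_def by (simp add: ac_simps)
    finally show ?thesis .
  qed
  have p1: "Q ^ Suc n = Q / w" unfolding w_def by (simp add: divide_inverse)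
  have bb: "b = Q * Q / a" using ab a by (simp add: field_simps power2_eq_square)
  have p2: "a ^ 2 * Q ^ (2 * Suc i) = a * a * (Q * J) * (Q * J)"
  proof -
    have "Q ^ (2 * Suc i) = (Q * Q ^ i) * (Q * Q ^ i)"
      by (simp only: mult_2 power_add power_Suc)
    then show ?thesis unfolding J_def by (simp add: power2_eq_square)
  qed
  have p3: "a * b * (Q / w) = Q * Q * (Q / w)" using ab by (simp add: power2_eq_square)
  show ?thesis unfolding Suc c2 c1 c0 dS p1 p2 p3 Qj
    using rat3[OF a Q w0 D0 J0 Qw, of X] unfolding bb by simp
qed

lemma R_rec:
  fixes Q a b z :: complex and n :: nat
  assumes Q: "Q \<noteq> 0" and a: "a \<noteq> 0" and ab: "a * b = Q ^ 2" and nzQ1: "\<And>m. 1 - Q ^ Suc m \<noteq> 0"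
    and z: "z \<noteq> 0"
  defines "c \<equiv> \<lambda>m j. qpoch (inverse (Q ^ m)) Q j * Q ^ j / (qpoch (Q ^ 2) Q j * qpoch Q Q j)"
  defines "\<phi> \<equiv> \<lambda>j. qpoch (a / z) Q j * qpoch (a * z) Q j"
  defines "R \<equiv> \<lambda>m. \<Sum>j\<le>m. c m j * \<phi> j"
  shows "(1 - a * b * Q ^ Suc n) / a * R (Suc (Suc n))
     = ((z + inverse z) - (a + b) * Q ^ Suc n) * R (Suc n) - a * (1 - Q ^ Suc n) * R n"
proof -
  define N where "N = Suc (Suc n)"
  define x where "x = z + inverse z"
  define d where "d = (\<lambda>j. if j = 0 then 0 else c (Suc n) (j - 1) / (a * Q ^ (j - 1)))"
  define A where "A = (\<lambda>j::nat. (1 + a ^ 2 * Q ^ (2 * j)) / (a * Q ^ j))"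
  define K where "K = a * (1 - Q ^ Suc n)"
  define s where "s = (a + b) * Q ^ Suc n"
  have cz: "c m j = 0" if "m < j" for m j
    unfolding c_def using qpoch_inv_zero[OF Q that] by simp
  have ext: "R m = (\<Sum>j\<le>N. c m j * \<phi> j)" if "m \<le> N" for m
    unfolding R_def
    by (rule sum.mono_neutral_right[symmetric]) (use that cz in auto)
  have xphi: "x * \<phi> j = A j * \<phi> j - \<phi> (Suc j) / (a * Q ^ j)" for j
  proof -
    have S: "\<phi> (Suc j) = \<phi> j * ((1 - a / z * Q ^ j) * (1 - a * z * Q ^ j))"
      unfolding \<phi>_def by (simp add: qpoch_Suc)
    have P: "Q ^ (2 * j) = Q ^ j * Q ^ j" by (simp add: mult_2 power_add)
    show ?thesis unfolding S A_def x_def P using a Q z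
      by (simp add: field_simps power2_eq_square)
  qed
  have shift: "(\<Sum>j\<le>N. c (Suc n) j * \<phi> (Suc j) / (a * Q ^ j)) = (\<Sum>j\<le>N. d j * \<phi> j)"
  proof -
    have "(\<Sum>j\<le>Suc N. d j * \<phi> j) = d 0 * \<phi> 0 + (\<Sum>j\<le>N. d (Suc j) * \<phi> (Suc j))"
      by (rule sum.atMost_Suc_shift)
    also have "\<dots> = (\<Sum>j\<le>N. c (Suc n) j * \<phi> (Suc j) / (a * Q ^ j))"
      unfolding d_def by simp
    finally have e1: "(\<Sum>j\<le>Suc N. d j * \<phi> j) = (\<Sum>j\<le>N. c (Suc n) j * \<phi> (Suc j) / (a * Q ^ j))" .
    have d0: "d (Suc N) = 0" unfolding d_def N_def using cz[of "Suc n" "Suc (Suc n)"] by simp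
    show ?thesis using e1[symmetric] unfolding sum.atMost_Suc d0 by simp
  qed
  have le1: "Suc n \<le> N" and le0: "n \<le> N" unfolding N_def by auto
  have T1: "x * R (Suc n) = (\<Sum>j\<le>N. c (Suc n) j * A j * \<phi> j) - (\<Sum>j\<le>N. d j * \<phi> j)"
  proof -
    have "x * R (Suc n) = (\<Sum>j\<le>N. c (Suc n) j * (x * \<phi> j))"
      unfolding ext[OF le1] by (simp add: sum_distrib_left ac_simps)
    also have "\<dots> = (\<Sum>j\<le>N. c (Suc n) j * A j * \<phi> j - c (Suc n) j * \<phi> (Suc j) / (a * Q ^ j))"
      unfolding xphi by (simp add: algebra_simps)
    also have "\<dots> = (\<Sum>j\<le>N. c (Suc n) j * A j * \<phi> j) - (\<Sum>j\<le>N. c (Suc n) j * \<phi> (Suc j) / (a * Q ^ j))"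
      by (rule sum_subtractf)
    finally show ?thesis unfolding shift .
  qed
  have co: "(1 - a * b * Q ^ Suc n) / a * c (Suc (Suc n)) j
     = (A j - s) * c (Suc n) j - d j - K * c n j" for j
    unfolding A_def s_def K_def d_def c_def by (rule coeff3[OF Q a ab nzQ1])
  have "((z + inverse z) - (a + b) * Q ^ Suc n) * R (Suc n) - a * (1 - Q ^ Suc n) * R n
      = x * R (Suc n) - s * R (Suc n) - K * R n" unfolding x_def s_def K_def by (simp add: algebra_simps)
  also have "\<dots> = (\<Sum>j\<le>N. c (Suc n) j * A j * \<phi> j) - (\<Sum>j\<le>N. d j * \<phi> j)
       - (\<Sum>j\<le>N. s * c (Suc n) j * \<phi> j) - (\<Sum>j\<le>N. K * c n j * \<phi> j)"
    by (subst T1) (simp add: ext[OF le1] ext[OF le0] sum_distrib_left mult.assoc)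
  also have "\<dots> = (\<Sum>j\<le>N. ((A j - s) * c (Suc n) j - d j - K * c n j) * \<phi> j)"
    by (simp add: sum_subtractf sum.distrib algebra_simps)
  also have "\<dots> = (\<Sum>j\<le>N. (1 - a * b * Q ^ Suc n) / a * c (Suc (Suc n)) j * \<phi> j)"
    unfolding co ..
  also have "\<dots> = (1 - a * b * Q ^ Suc n) / a * R (Suc (Suc n))"
    unfolding R_def N_def sum_distrib_left by (simp only: mult.assoc)
  finally show ?thesis ..
qed

lemma qpoch_add: "qpoch u Q (m + k) = qpoch u Q m * (\<Prod>i<k. 1 - u * Q ^ (m + i))"
  by (induction k) (simp_all add: qpoch_Suc)

lemma Dprod:
  fixes Q y :: complex
  assumes "k \<le> n" "y \<noteq> 0"
  shows "(\<Prod>i<k. 1 - Q / y * Q ^ (n - k + i)) = (\<Prod>i<k. 1 - Q ^ (n - i) / y)"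
proof -
  have "(\<Prod>i<k. 1 - Q / y * Q ^ (n - k + i)) = (\<Prod>i<k. 1 - Q / y * Q ^ (n - k + (k - Suc i)))"
    by (rule prod.nat_diff_reindex[symmetric])
  also have "\<dots> = (\<Prod>i<k. 1 - Q ^ (n - i) / y)"
  proof (rule prod.cong[OF refl])
    fix i assume "i \<in> {..<k}"
    then have "Suc (n - k + (k - Suc i)) = n - i" using assms(1) by auto
    then have "Q * Q ^ (n - k + (k - Suc i)) = Q ^ (n - i)" by (metis power_Suc)
    then show "1 - Q / y * Q ^ (n - k + (k - Suc i)) = 1 - Q ^ (n - i) / y"
      by (metis times_divide_eq_left mult.commute)
  qed
  finally show ?thesis .
qed

lemma Wprod:
  fixes Q y w :: complex
  assumes "k \<le> n" "y \<noteq> 0" "Q \<noteq> 0" and w: "w = inverse (Q ^ n)"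
  shows "qpoch (w * y) Q k = (\<Prod>i<k. - (w * y * Q ^ i)) * (\<Prod>i<k. 1 - Q ^ (n - i) / y)"
proof -
  have "1 - w * y * Q ^ i = - (w * y * Q ^ i) * (1 - Q ^ (n - i) / y)" if "i < k" for i
  proof -
    have "Q ^ i * Q ^ (n - i) = Q ^ n" using that assms(1) by (simp add: power_add[symmetric])
    then have "w * Q ^ i * Q ^ (n - i) = 1" unfolding w using assms(3) by (simp add: field_simps)
    then show ?thesis using assms(2) by (simp add: field_simps)
  qed
  then show ?thesis unfolding qpoch_def prod.distrib[symmetric] by (intro prod.cong) auto
qed

lemma term2:
  fixes Q z \<tau> A :: complex and n k :: nat
  assumes Q: "Q \<noteq> 0" and z: "z \<noteq> 0" and t: "\<tau> \<noteq> 0" and kn: "k \<le> n"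
    and nzQ: "\<And>m. qpoch Q Q m \<noteq> 0"
    and C: "qpoch (inverse (Q ^ n) * \<tau> / z) Q k \<noteq> 0"
  shows "qpoch Q Q n * (A * qpoch (Q * z / \<tau>) Q (n - k) / (qpoch Q Q k * qpoch Q Q (n - k))
             * z powi (2 * int k - int n))
       = qpoch (Q * z / \<tau>) Q n / z ^ n *
         (qpoch (inverse (Q ^ n)) Q k * A / (qpoch (inverse (Q ^ n) * \<tau> / z) Q k * qpoch Q Q k) * (\<tau> * z) ^ k)"
proof -
  define w where "w = inverse (Q ^ n)"
  define y where "y = \<tau> / z"
  have y0: "y \<noteq> 0" unfolding y_def using z t by simp
  define D1 where "D1 = (\<Prod>i<k. 1 - Q ^ (n - i) / 1)"
  define Dy where "Dy = (\<Prod>i<k. 1 - Q ^ (n - i) / y)"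
  define M1 where "M1 = (\<Prod>i<k. - (w * Q ^ i))"
  have nk: "n = (n - k) + k" using kn by simp
  have a: "qpoch Q Q n = qpoch Q Q (n - k) * D1"
  proof -
    have "qpoch Q Q n = qpoch Q Q (n - k) * (\<Prod>i<k. 1 - Q / 1 * Q ^ (n - k + i))"
      by (subst nk, subst qpoch_add) simp
    then show ?thesis unfolding D1_def Dprod[OF kn one_neq_zero] .
  qed
  have b: "qpoch (Q * z / \<tau>) Q n = qpoch (Q * z / \<tau>) Q (n - k) * Dy"
  proof -
    have e: "Q * z / \<tau> = Q / y" unfolding y_def using z t by simp
    have "qpoch (Q / y) Q n = qpoch (Q / y) Q (n - k) * (\<Prod>i<k. 1 - Q / y * Q ^ (n - k + i))"
      by (subst nk, subst qpoch_add) simp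
    then show ?thesis unfolding Dy_def Dprod[OF kn y0] e .
  qed
  have Mprod: "(\<Prod>i<k. - (w * y * Q ^ i)) = y ^ k * M1"
  proof -
    have "(\<Prod>i<k. - (w * y * Q ^ i)) = (\<Prod>i<k. y * (- (w * Q ^ i)))"
      by (rule prod.cong[OF refl]) (simp add: algebra_simps)
    also have "\<dots> = (\<Prod>i<k. y) * (\<Prod>i<k. - (w * Q ^ i))" by (rule prod.distrib)
    finally show ?thesis unfolding M1_def by simp
  qed
  have c: "qpoch w Q k = M1 * D1"
    using Wprod[OF kn one_neq_zero Q, of w] unfolding w_def M1_def D1_def by simp
  have d: "qpoch (w * \<tau> / z) Q k = y ^ k * M1 * Dy"
  proof -
    have d0: "qpoch (w * y) Q k = y ^ k * M1 * Dy"
      using Wprod[OF kn y0 Q w_def] unfolding Mprod Dy_def by simp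
    have "w * \<tau> / z = w * y" unfolding y_def by simp
    then show ?thesis using d0 by simp
  qed
  have Cn: "y ^ k * M1 * Dy \<noteq> 0" using C unfolding d[unfolded w_def, symmetric] by simp
  then have M10: "M1 \<noteq> 0" and Dy0: "Dy \<noteq> 0" by auto
  have zz: "z powi (2 * int k - int n) = z ^ k * inverse z ^ (n - k)" by (rule powi_split[OF z kn])
  have zn: "z ^ n = z ^ k * z ^ (n - k)" by (subst nk) (simp add: power_add)
  have tz: "(\<tau> * z) ^ k / y ^ k = z ^ k * z ^ k" unfolding y_def using z t
    by (simp add: power_mult_distrib power_divide field_simps)
  have nz1: "qpoch Q Q (n - k) \<noteq> 0" "qpoch Q Q k \<noteq> 0" by (rule nzQ)+
  show ?thesis
    unfolding a b zz w_def[symmetric] c d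
  proof -
    have "qpoch (Q * z / \<tau>) Q (n - k) * Dy / z ^ n *
      (M1 * D1 * A / (y ^ k * M1 * Dy * qpoch Q Q k) * (\<tau> * z) ^ k)
      = qpoch (Q * z / \<tau>) Q (n - k) * D1 * A / qpoch Q Q k * (((\<tau> * z) ^ k / y ^ k) / z ^ n)"
      using M10 Dy0 y0 by (simp add: field_simps)
    also have "\<dots> = qpoch (Q * z / \<tau>) Q (n - k) * D1 * A / qpoch Q Q k * (z ^ k * inverse z ^ (n - k))"
      unfolding tz zn using z by (simp add: field_simps)
    also have "\<dots> = qpoch Q Q (n - k) * D1 * (A * qpoch (Q * z / \<tau>) Q (n - k) / (qpoch Q Q k * qpoch Q Q (n - k))
        * (z ^ k * inverse z ^ (n - k)))"
      using nz1 by (simp add: field_simps)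
    finally show "qpoch Q Q (n - k) * D1 * (A * qpoch (Q * z / \<tau>) Q (n - k) / (qpoch Q Q k * qpoch Q Q (n - k))
        * (z ^ k * inverse z ^ (n - k)))
      = qpoch (Q * z / \<tau>) Q (n - k) * Dy / z ^ n *
      (M1 * D1 * A / (y ^ k * M1 * Dy * qpoch Q Q k) * (\<tau> * z) ^ k)" by simp
  qed
qed

lemma key3:
  fixes a Bn u1 u2 u3 v0 v1 x K R0 R1 R2 :: complex
  assumes "a \<noteq> 0" "Bn \<noteq> 0" "u3 \<noteq> 0" "v0 \<noteq> 0" "v1 \<noteq> 0"
    and rec: "u3 / a * R2 = x * v1 * R1 - a * u1 * R0"
  shows "K * u2 * u3 / (a * a) / (Bn * v0 * v1) * R2 = x * (K * u2 / a / (Bn * v0) * R1) - u1 / v0 * (u2 / v1) * (K / Bn * R0)"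
proof -
  have R2e: "R2 = a * (x * v1 * R1 - a * u1 * R0) / u3" using rec assms(1,3) by (simp add: field_simps)
  show ?thesis unfolding R2e using assms(1-5) by (simp add: field_simps)
qed

lemma part3:
  fixes q \<beta> :: real and z \<tau> :: complex
  assumes q0: "0 < q" and q1: "q < 1" and b1: "\<beta> < 1" and z: "z \<noteq> 0" and t: "\<tau> \<noteq> 0"
    and hyp: "of_real q * (\<tau> + inverse \<tau>) = of_real \<beta> * (z + inverse z)"
  defines "R \<equiv> \<lambda>m. \<Sum>j\<le>m. qpoch (inverse (of_real q ^ m)) (of_real q) j * of_real q ^ j
        / (qpoch (of_real q ^ 2) (of_real q) j * qpoch (of_real q) (of_real q) j)
        * (qpoch (of_real q * \<tau> / z) (of_real q) j * qpoch (of_real q * \<tau> * z) (of_real q) j)"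
  shows "pab q \<beta> q n (z + inverse z) =
           qpoch (of_real q ^ 2) (of_real q) n / (of_real q ^ n * \<tau> ^ n) / qpoch (of_real \<beta>) (of_real q) n * R n"
proof -
  define Q :: complex where "Q = of_real q"
  define B :: complex where "B = of_real \<beta>"
  define x where "x = z + inverse z"
  define a where "a = Q * \<tau>"
  define b where "b = Q / \<tau>"
  have nzQ: "\<And>m. qpoch Q Q m \<noteq> 0" unfolding Q_def by (rule qpoch_real_nz[OF q0 q1 q1])
  have nzB: "\<And>m. qpoch B Q m \<noteq> 0" unfolding Q_def B_def by (rule qpoch_real_nz[OF q0 q1 b1])
  have nzQ1: "\<And>m. 1 - Q ^ Suc m \<noteq> 0" unfolding Q_def by (rule Qpow_nz[OF q0 q1])
  have nzB1: "\<And>m. 1 - B * Q ^ m \<noteq> 0" unfolding Q_def B_def by (rule factor_nz[OF q0 q1 b1])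
  have Qnz: "Q \<noteq> 0" unfolding Q_def using q0 by simp
  have a0: "a \<noteq> 0" unfolding a_def using Qnz t by simp
  have ab: "a * b = Q ^ 2" unfolding a_def b_def using t by (simp add: field_simps power2_eq_square)
  have s: "a + b = B * x"
    using hyp t unfolding a_def b_def x_def Q_def B_def by (simp add: field_simps)
  have Rdef: "R = (\<lambda>m. \<Sum>j\<le>m. qpoch (inverse (Q ^ m)) Q j * Q ^ j / (qpoch (Q ^ 2) Q j * qpoch Q Q j)
        * (qpoch (a / z) Q j * qpoch (a * z) Q j))"
    unfolding R_def Q_def a_def by simp
  define K where "K m = qpoch (Q ^ 2) Q m / (Q ^ m * \<tau> ^ m)" for m
  define h where "h m = K m / qpoch B Q m * R m" for m
  have gam: "gam q \<beta> q m = (1 - Q * Q ^ m) / (1 - B * Q ^ m)" for m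
    unfolding gam_def Q_def B_def by simp
  have K1: "K (Suc m) = K m * (1 - Q ^ 2 * Q ^ m) / a" for m
    unfolding K_def a_def using Qnz t by (simp add: qpoch_Suc field_simps)
  have rec: "(1 - Q ^ 2 * Q ^ Suc m) / a * R (Suc (Suc m)) = x * (1 - B * Q ^ Suc m) * R (Suc m) - a * (1 - Q ^ Suc m) * R m" for m
  proof -
    have "(1 - a * b * Q ^ Suc m) / a * R (Suc (Suc m))
     = ((z + inverse z) - (a + b) * Q ^ Suc m) * R (Suc m) - a * (1 - Q ^ Suc m) * R m"
      unfolding Rdef by (rule R_rec[OF Qnz a0 ab nzQ1 z])
    then show ?thesis unfolding ab s x_def[symmetric] by (simp add: algebra_simps)
  qed
  have R0: "R 0 = 1" unfolding Rdef by simp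
  have R1: "R 1 = 1 + (1 - inverse Q) * Q / ((1 - Q ^ 2) * (1 - Q)) * ((1 - a / z) * (1 - a * z))"
    unfolding Rdef by (simp add: qpoch_def)
  have "pab q \<beta> q n x = h n \<and> pab q \<beta> q (Suc n) x = h (Suc n)"
  proof (induction n)
    case 0
    have "h 1 = x"
    proof -
      have q1': "1 - Q \<noteq> 0" using nzQ1[of 0] by simp
      have q2': "1 - Q ^ 2 \<noteq> 0" using nzQ1[of 1] by (simp add: power2_eq_square)
      have B1': "1 - B \<noteq> 0" using nzB1[of 0] by simp
      have H1: "h 1 = ((1 - Q ^ 2) * R 1) / a / (1 - B)"
        unfolding h_def K_def a_def by (simp add: qpoch_def power2_eq_square)
      have RR: "(1 - Q ^ 2) * R 1 = a * x - a * (a + b)"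
      proof -
        have c11: "(1 - inverse Q) * Q / ((1 - Q ^ 2) * (1 - Q)) = - 1 / (1 - Q ^ 2)"
        proof -
          have "(1 - inverse Q) * Q = - (1 - Q)" using Qnz by (simp add: algebra_simps)
          moreover have "(- 1) * (1 - Q) / ((1 - Q ^ 2) * (1 - Q)) = - 1 / (1 - Q ^ 2)"
            by (rule nonzero_mult_divide_mult_cancel_right[OF q1'])
          ultimately show ?thesis by (metis mult_minus1)
        qed
        have p1: "(1 - a / z) * (1 - a * z) = 1 - a * x + a * a"
          unfolding x_def using z by (simp add: field_simps)
        have "(1 - Q ^ 2) * R 1 = (1 - Q ^ 2) - (1 - a * x + a * a)"
          unfolding R1 c11 p1 using q2' by (simp add: field_simps)
        also have "\<dots> = a * x - a * (a + b)" unfolding ab[symmetric] by (simp add: algebra_simps)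
        finally show ?thesis .
      qed
      show ?thesis unfolding H1 RR s using a0 B1' by (simp add: field_simps)
    qed
    moreover have "h 0 = 1" unfolding h_def K_def R0 by simp
    ultimately show ?case unfolding x_def by simp
  next
    case (Suc n)
    have IH1: "pab q \<beta> q n x = h n" and IH2: "pab q \<beta> q (Suc n) x = h (Suc n)" using Suc by auto
    have "pab q \<beta> q (Suc (Suc n)) x = x * h (Suc n) - gam q \<beta> q n * gam q \<beta> q (Suc n) * h n"
      using IH1 IH2 by simp
    also have "\<dots> = h (Suc (Suc n))"
    proof -
      have u3: "1 - Q ^ 2 * Q ^ Suc n \<noteq> 0" using nzQ1[of "Suc (Suc n)"] by (simp add: power2_eq_square ac_simps)
      have e1: "1 - Q * Q ^ Suc n = 1 - Q ^ 2 * Q ^ n" by (simp add: power2_eq_square)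
      have e2: "qpoch B Q (Suc (Suc n)) = qpoch B Q n * (1 - B * Q ^ n) * (1 - B * Q ^ Suc n)"
        by (simp add: qpoch_Suc)
      have e3: "qpoch B Q (Suc n) = qpoch B Q n * (1 - B * Q ^ n)" by (simp add: qpoch_Suc)
      have e4: "K (Suc (Suc n)) = K n * (1 - Q ^ 2 * Q ^ n) * (1 - Q ^ 2 * Q ^ Suc n) / (a * a)"
        unfolding K1 by simp
      have hS: "h (Suc n) = K n * (1 - Q ^ 2 * Q ^ n) / a / (qpoch B Q n * (1 - B * Q ^ n)) * R (Suc n)"
        unfolding h_def K1 e3 by simp
      have hSS: "h (Suc (Suc n)) = K n * (1 - Q ^ 2 * Q ^ n) * (1 - Q ^ 2 * Q ^ Suc n) / (a * a)
          / (qpoch B Q n * (1 - B * Q ^ n) * (1 - B * Q ^ Suc n)) * R (Suc (Suc n))"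
        unfolding h_def e4 e2 by simp
      have hn: "h n = K n / qpoch B Q n * R n" by (simp add: h_def)
      have g1: "gam q \<beta> q n = (1 - Q ^ Suc n) / (1 - B * Q ^ n)" unfolding gam by simp
      have g2: "gam q \<beta> q (Suc n) = (1 - Q ^ 2 * Q ^ n) / (1 - B * Q ^ Suc n)" unfolding gam e1 ..
      show ?thesis unfolding hS hSS hn g1 g2
        using key3[OF a0 nzB u3 nzB1 nzB1 rec, of "K n" "1 - Q ^ 2 * Q ^ n"]
        by simp
    qed
    finally show ?case using IH2 by simp
  qed
  then show ?thesis unfolding h_def K_def x_def Q_def B_def by simp
qed

lemma div_rearr:
  fixes p a b s c d f :: complex
  assumes "p = a / b * s" "a * s = c / d * f"
  shows "p = c / (d * b) * f"
proof -
  have "p = (a * s) * inverse b" using assms(1) by (simp add: divide_inverse ac_simps)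
  also have "\<dots> = c / (d * b) * f" unfolding assms(2) by (simp add: divide_inverse ac_simps)
  finally show ?thesis .
qed

theorem proposition2p18:
  fixes q \<beta> :: real and n :: nat and z \<tau> :: complex
  assumes "0 < q" "q < 1" "\<beta> < 1" "z \<noteq> 0" "\<tau> \<noteq> 0"
    and "of_real q * (\<tau> + inverse \<tau>) = of_real \<beta> * (z + inverse z)"
  shows "(pab q \<beta> q n (z + inverse z) =
           qpoch (of_real q) (of_real q) n / qpoch (of_real \<beta>) (of_real q) n *
           (\<Sum>k\<le>n. qpoch (of_real q * \<tau> / z) (of_real q) k
                     * qpoch (of_real q * z / \<tau>) (of_real q) (n - k)
                     / (qpoch (of_real q) (of_real q) k * qpoch (of_real q) (of_real q) (n - k))
                     * z powi (2 * int k - int n))) \<and>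
         ((\<forall>k\<le>n. qpoch (inverse (of_real q ^ n) * \<tau> / z) (of_real q) k \<noteq> 0) \<longrightarrow>
         pab q \<beta> q n (z + inverse z) =
           qpoch (of_real q * z / \<tau>) (of_real q) n / (z ^ n * qpoch (of_real \<beta>) (of_real q) n) *
           phi21 (inverse (of_real q ^ n)) (of_real q * \<tau> / z) (inverse (of_real q ^ n) * \<tau> / z)
                 (of_real q) (\<tau> * z)) \<and>
         pab q \<beta> q n (z + inverse z) =
           qpoch (of_real q ^ 2) (of_real q) n / (of_real q ^ n * \<tau> ^ n * qpoch (of_real \<beta>) (of_real q) n) *
           phi32 (inverse (of_real q ^ n)) (of_real q * \<tau> / z) (of_real q * \<tau> * z) (of_real q ^ 2) 0
                 (of_real q) (of_real q)"
proof -
  define Q :: complex where "Q = of_real q"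
  have Q0: "Q \<noteq> 0" unfolding Q_def using assms(1) by simp
  have nzQ: "\<And>m. qpoch Q Q m \<noteq> 0" unfolding Q_def by (rule qpoch_real_nz[OF assms(1,2,2)])
  have P1: "pab q \<beta> q n (z + inverse z) =
           qpoch (of_real q) (of_real q) n / qpoch (of_real \<beta>) (of_real q) n *
           (\<Sum>k\<le>n. qpoch (of_real q * \<tau> / z) (of_real q) k
                     * qpoch (of_real q * z / \<tau>) (of_real q) (n - k)
                     / (qpoch (of_real q) (of_real q) k * qpoch (of_real q) (of_real q) (n - k))
                     * z powi (2 * int k - int n))"
    using part1[OF assms] by simp
  have P2: "pab q \<beta> q n (z + inverse z) =
           qpoch (of_real q * z / \<tau>) (of_real q) n / (z ^ n * qpoch (of_real \<beta>) (of_real q) n) *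
           phi21 (inverse (of_real q ^ n)) (of_real q * \<tau> / z) (inverse (of_real q ^ n) * \<tau> / z)
                 (of_real q) (\<tau> * z)"
    if C: "\<forall>k\<le>n. qpoch (inverse (of_real q ^ n) * \<tau> / z) (of_real q) k \<noteq> 0"
  proof -
    have phi: "phi21 (inverse (Q ^ n)) (Q * \<tau> / z) (inverse (Q ^ n) * \<tau> / z) Q (\<tau> * z)
       = (\<Sum>k\<le>n. qpoch (inverse (Q ^ n)) Q k * qpoch (Q * \<tau> / z) Q k
            / (qpoch (inverse (Q ^ n) * \<tau> / z) Q k * qpoch Q Q k) * (\<tau> * z) ^ k)"
      unfolding phi21_def by (rule suminf_finite) (auto simp: qpoch_inv_zero[OF Q0])
    have "qpoch Q Q n * (\<Sum>k\<le>n. qpoch (Q * \<tau> / z) Q k * qpoch (Q * z / \<tau>) Q (n - k)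
                     / (qpoch Q Q k * qpoch Q Q (n - k)) * z powi (2 * int k - int n))
       = (\<Sum>k\<le>n. qpoch (Q * z / \<tau>) Q n / z ^ n * (qpoch (inverse (Q ^ n)) Q k * qpoch (Q * \<tau> / z) Q k
            / (qpoch (inverse (Q ^ n) * \<tau> / z) Q k * qpoch Q Q k) * (\<tau> * z) ^ k))"
      unfolding sum_distrib_left
    proof (rule sum.cong[OF refl])
      fix k assume "k \<in> {..n}"
      then have kn: "k \<le> n" by simp
      have Ck: "qpoch (inverse (Q ^ n) * \<tau> / z) Q k \<noteq> 0" using C kn unfolding Q_def by simp
      show "qpoch Q Q n * (qpoch (Q * \<tau> / z) Q k * qpoch (Q * z / \<tau>) Q (n - k)
                     / (qpoch Q Q k * qpoch Q Q (n - k)) * z powi (2 * int k - int n))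
         = qpoch (Q * z / \<tau>) Q n / z ^ n * (qpoch (inverse (Q ^ n)) Q k * qpoch (Q * \<tau> / z) Q k
            / (qpoch (inverse (Q ^ n) * \<tau> / z) Q k * qpoch Q Q k) * (\<tau> * z) ^ k)"
        by (rule term2[OF Q0 assms(4,5) kn nzQ Ck])
    qed
    then have S: "qpoch Q Q n * (\<Sum>k\<le>n. qpoch (Q * \<tau> / z) Q k * qpoch (Q * z / \<tau>) Q (n - k)
                     / (qpoch Q Q k * qpoch Q Q (n - k)) * z powi (2 * int k - int n))
       = qpoch (Q * z / \<tau>) Q n / z ^ n * phi21 (inverse (Q ^ n)) (Q * \<tau> / z) (inverse (Q ^ n) * \<tau> / z) Q (\<tau> * z)"
      unfolding phi sum_distrib_left .
    show ?thesis using div_rearr[OF P1[unfolded Q_def[symmetric]] S] unfolding Q_def .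
  qed
  have P3: "pab q \<beta> q n (z + inverse z) =
           qpoch (of_real q ^ 2) (of_real q) n / (of_real q ^ n * \<tau> ^ n * qpoch (of_real \<beta>) (of_real q) n) *
           phi32 (inverse (of_real q ^ n)) (of_real q * \<tau> / z) (of_real q * \<tau> * z) (of_real q ^ 2) 0
                 (of_real q) (of_real q)"
  proof -
    have phi: "phi32 (inverse (Q ^ n)) (Q * \<tau> / z) (Q * \<tau> * z) (Q ^ 2) 0 Q Q
       = (\<Sum>j\<le>n. qpoch (inverse (Q ^ n)) Q j * Q ^ j
        / (qpoch (Q ^ 2) Q j * qpoch Q Q j)
        * (qpoch (Q * \<tau> / z) Q j * qpoch (Q * \<tau> * z) Q j))"
    proof -
      have "phi32 (inverse (Q ^ n)) (Q * \<tau> / z) (Q * \<tau> * z) (Q ^ 2) 0 Q Q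
        = (\<Sum>j\<le>n. qpoch (inverse (Q ^ n)) Q j * qpoch (Q * \<tau> / z) Q j * qpoch (Q * \<tau> * z) Q j
       / (qpoch (Q ^ 2) Q j * qpoch 0 Q j * qpoch Q Q j) * Q ^ j)"
        unfolding phi32_def by (rule suminf_finite) (auto simp: qpoch_inv_zero[OF Q0])
      also have "\<dots> = (\<Sum>j\<le>n. qpoch (inverse (Q ^ n)) Q j * Q ^ j
        / (qpoch (Q ^ 2) Q j * qpoch Q Q j)
        * (qpoch (Q * \<tau> / z) Q j * qpoch (Q * \<tau> * z) Q j))"
        by (rule sum.cong[OF refl]) (simp add: qpoch_def divide_inverse ac_simps)
      finally show ?thesis .
    qed
    show ?thesis using part3[OF assms, of n] unfolding Q_def[symmetric] phi
      by simp
  qed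
  show ?thesis using P1 P2 P3 by blast
qed

end
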